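(* Let $\lambda\in\mathbb{R}$ and define, for $x>0$, $$F_\lambda(x)=\psi'(x)-\frac{\lambda (4+8 x+5 x^2)}{24 x (1+x)^3 (2+x)^2}-\frac{24+120 x+283 x^2+399 x^3+345 x^4+181 x^5+51 x^6+6 x^7}{6 x^2 (1+x)^4 (2+x)^2}.$$ Then $F_\lambda$ is completely monotonic on $(0,\infty)$ if and only if $\lambda\le0$, and $-F_\lambda$ is completely monotonic on $(0,\infty)$ if and only if $\lambda\ge4$.
   Context: $\Gamma$ is Euler's gamma function, $\psi=\Gamma'/\Gamma$ is the digamma function, and $\psi'$ is its derivative (trigamma function). A function $f$ is completely monotonic on an interval $I$ if $f$ has derivatives of all orders on $I$ and $0\le(-1)^n f^{(n)}(x)<\infty$ for all $x\in I$ and all integers $n\ge0$. *)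

theory Defs
  imports "HOL-Analysis.Analysis"
begin

definition completely_monotonic_on :: "real set \<Rightarrow> (real \<Rightarrow> real) \<Rightarrow> bool" where
  "completely_monotonic_on I f \<longleftrightarrow>
     (\<forall>n. \<forall>x\<in>I. (deriv ^^ n) f differentiable (at x)) \<and>
     (\<forall>n. \<forall>x\<in>I. 0 \<le> (-1) ^ n * (deriv ^^ n) f x)"

definition F_lambda :: "real \<Rightarrow> real \<Rightarrow> real" where
  "F_lambda lam x = Polygamma 1 x
     - lam * (4 + 8*x + 5*x^2) / (24 * x * (1+x)^3 * (2+x)^2)
     - (24 + 120*x + 283*x^2 + 399*x^3 + 345*x^4 + 181*x^5 + 51*x^6 + 6*x^7)
       / (6 * x^2 * (1+x)^4 * (2+x)^2)"

end

theory Submission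
  imports Defs "HOL-Real_Asymp.Real_Asymp"
begin

definition dseq :: "real set \<Rightarrow> (real\<Rightarrow>real) \<Rightarrow> (nat \<Rightarrow> real \<Rightarrow> real) \<Rightarrow> bool" where
 "dseq S f fs \<longleftrightarrow> (\<forall>x\<in>S. fs 0 x = f x) \<and> (\<forall>n. \<forall>x\<in>S. (fs n has_real_derivative fs (Suc n) x) (at x))"

lemma dseq_deriv:
  assumes S: "open S" and d: "dseq S f fs"
  shows "\<forall>x\<in>S. (deriv^^n) f x = fs n x"
proof (induction n)
  case 0 then show ?case using d by (simp add: dseq_def)
next
  case (Suc n)
  show ?case
  proof
    fix x assume x: "x \<in> S"
    have "(fs n has_real_derivative fs (Suc n) x) (at x)" using d x by (simp add: dseq_def)
    then have "((deriv^^n) f has_real_derivative fs (Suc n) x) (at x)"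
      by (rule has_field_derivative_transform_within_open[OF _ S x]) (use Suc in auto)
    then show "(deriv^^Suc n) f x = fs (Suc n) x" by (simp add: DERIV_imp_deriv)
  qed
qed

lemma dseq_differentiable:
  assumes S: "open S" and d: "dseq S f fs" and x: "x \<in> S"
  shows "(deriv^^n) f differentiable (at x)"
proof -
  have "(fs n has_real_derivative fs (Suc n) x) (at x)" using d x by (simp add: dseq_def)
  then have "((deriv^^n) f has_real_derivative fs (Suc n) x) (at x)"
    by (rule has_field_derivative_transform_within_open[OF _ S x]) (use dseq_deriv[OF S d] in auto)
  then show ?thesis by (metis differentiableI has_field_derivative_def)
qed

lemma dseq_cm:
  assumes "dseq {0<..} f fs" "\<And>n x. x > 0 \<Longrightarrow> 0 \<le> (-1)^n * fs n x"
  shows "completely_monotonic_on {0<..} f"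
  unfolding completely_monotonic_on_def
  using dseq_differentiable[OF _ assms(1)] dseq_deriv[OF _ assms(1)] assms(2) by auto

lemma dseq_add: "dseq S f fs \<Longrightarrow> dseq S g gs \<Longrightarrow> dseq S (\<lambda>x. f x + g x) (\<lambda>n x. fs n x + gs n x)"
  by (auto simp: dseq_def intro!: derivative_intros)

lemma dseq_cmult: "dseq S f fs \<Longrightarrow> dseq S (\<lambda>x. c * f x) (\<lambda>n x. c * fs n x)"
  by (auto simp: dseq_def intro!: DERIV_cmult)

lemma dseq_cong: "dseq S f fs \<Longrightarrow> (\<And>x. x \<in> S \<Longrightarrow> f x = g x) \<Longrightarrow> dseq S g fs"
  by (auto simp: dseq_def)

lemma deriv_inv_pow:
  assumes nz: "x + a \<noteq> (0::real)"
  shows "((\<lambda>x. inverse ((x+a)^k)) has_real_derivative (- real k * inverse ((x+a)^(Suc k)))) (at x)"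
proof -
  have d: "((\<lambda>x. (x+a)^k) has_real_derivative of_nat k * (1 * (x+a) ^ (k - Suc 0))) (at x)"
    by (intro DERIV_power derivative_eq_intros) auto
  have "((\<lambda>x. inverse ((x+a)^k)) has_real_derivative (- ((of_nat k * (1 * (x+a) ^ (k - Suc 0))) * inverse (((x+a)^k) ^ Suc (Suc 0))))) (at x)"
    by (rule DERIV_inverse_fun[OF d]) (use nz in simp)
  also have "(- ((of_nat k * (1 * (x+a) ^ (k - Suc 0))) * inverse (((x+a)^k) ^ Suc (Suc 0)))) = - real k * inverse ((x+a)^(Suc k))"
  proof (cases k)
    case (Suc m)
    have "((x+a)^k) ^ Suc (Suc 0) = (x+a)^m * (x+a)^(Suc k)"
      by (simp add: Suc power_add[symmetric] power_mult[symmetric])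
    have "(x+a) ^ (k - Suc 0) * inverse (((x+a)^k) ^ Suc (Suc 0)) = inverse ((x+a)^(Suc k))"
      unfolding \<open>((x+a)^k) ^ Suc (Suc 0) = (x+a)^m * (x+a)^(Suc k)\<close> using nz Suc by simp
    then show ?thesis by (simp add: mult.assoc)
  qed simp
  finally show ?thesis .
qed

lemma dseq_power_inv:
  "dseq {x. x > -a} (\<lambda>x. 1 / (x + a)^e) (\<lambda>n x. (-1)^n * pochhammer (real e) n / (x+a)^(e+n))"
  unfolding dseq_def
proof safe
  fix n and x :: real assume x: "- a < x"
  then have nz: "x + a \<noteq> 0" by auto
  have "((\<lambda>x. (-1)^n * pochhammer (real e) n * inverse ((x+a)^(e+n))) has_real_derivative
        (-1)^n * pochhammer (real e) n * (- real (e+n) * inverse ((x+a)^(Suc (e+n))))) (at x)"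
    by (intro DERIV_cmult deriv_inv_pow nz)
  also have "(-1)^n * pochhammer (real e) n * (- real (e+n) * inverse ((x+a)^(Suc (e+n))))
       = (-1)^Suc n * pochhammer (real e) (Suc n) / (x+a)^(e + Suc n)"
    by (simp add: pochhammer_rec' field_simps)
  finally show "((\<lambda>x. (-1)^n * pochhammer (real e) n / (x+a)^(e+n)) has_real_derivative
        (-1)^Suc n * pochhammer (real e) (Suc n) / (x+a)^(e + Suc n)) (at x)" by (simp add: divide_inverse)
qed simp

fun Pm :: "nat \<Rightarrow> (nat \<Rightarrow> real \<Rightarrow> real) \<Rightarrow> (nat \<Rightarrow> real \<Rightarrow> real) \<Rightarrow> real \<Rightarrow> real" where
  "Pm 0 fs gs x = fs 0 x * gs 0 x"
| "Pm (Suc n) fs gs x = Pm n (\<lambda>k. fs (Suc k)) gs x + Pm n fs (\<lambda>k. gs (Suc k)) x"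

lemma Pm_deriv:
  assumes "\<And>k. (fs k has_real_derivative fs (Suc k) x) (at x)"
      and "\<And>k. (gs k has_real_derivative gs (Suc k) x) (at x)"
  shows "((\<lambda>y. Pm n fs gs y) has_real_derivative Pm (Suc n) fs gs x) (at x)"
  using assms
proof (induction n arbitrary: fs gs)
  case 0
  show ?case using DERIV_mult[OF "0.prems"(1)[of 0] "0.prems"(2)[of 0]] by (simp add: ac_simps)
next
  case (Suc n)
  have "((\<lambda>y. Pm n (\<lambda>k. fs (Suc k)) gs y + Pm n fs (\<lambda>k. gs (Suc k)) y) has_real_derivative
        Pm (Suc n) (\<lambda>k. fs (Suc k)) gs x + Pm (Suc n) fs (\<lambda>k. gs (Suc k)) x) (at x)"
    by (intro DERIV_add Suc.IH) (use Suc.prems in auto)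
  then show ?case by simp
qed

lemma Pm_neg1: "Pm n (\<lambda>k. - fs k) gs x = - Pm n fs gs x"
  by (induction n arbitrary: fs gs) auto

lemma Pm_neg2: "Pm n fs (\<lambda>k. - gs k) x = - Pm n fs gs x"
  by (induction n arbitrary: fs gs) auto

lemma Pm_sign:
  assumes "\<And>k. 0 \<le> (-1)^k * fs k x" "\<And>k. 0 \<le> (-1)^k * gs k x"
  shows "0 \<le> (-1)^n * Pm n fs gs x"
  using assms
proof (induction n arbitrary: fs gs)
  case 0 then show ?case using mult_nonneg_nonneg[OF "0.prems"(1)[of 0] "0.prems"(2)[of 0]] by simp
next
  case (Suc n)
  have h1: "0 \<le> (-1)^k * - fs (Suc k) x" for k using Suc.prems(1)[of "Suc k"] by simp
  have h2: "0 \<le> (-1)^k * - gs (Suc k) x" for k using Suc.prems(2)[of "Suc k"] by simp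
  have 1: "0 \<le> (-1)^n * Pm n (\<lambda>k. - fs (Suc k)) gs x"
    by (rule Suc.IH) (use h1 Suc.prems(2) in auto)
  have 2: "0 \<le> (-1)^n * Pm n fs (\<lambda>k. - gs (Suc k)) x"
    by (rule Suc.IH) (use h2 Suc.prems(1) in auto)
  have "(-1)^Suc n * Pm (Suc n) fs gs x = (-1)^n * Pm n (\<lambda>k. - fs (Suc k)) gs x + (-1)^n * Pm n fs (\<lambda>k. - gs (Suc k)) x"
    by (simp add: Pm_neg1[of n "\<lambda>k. fs (Suc k)"] Pm_neg2[of n fs "\<lambda>k. gs (Suc k)"] algebra_simps)
  then show ?case using 1 2 by simp
qed

lemma dseq_mult: "dseq S f fs \<Longrightarrow> dseq S g gs \<Longrightarrow> dseq S (\<lambda>x. f x * g x) (\<lambda>n x. Pm n fs gs x)"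
  unfolding dseq_def using Pm_deriv[of fs _ gs] by (auto simp del: Pm.simps(2))

lemma dseq_mono: "dseq S f fs \<Longrightarrow> T \<subseteq> S \<Longrightarrow> dseq T f fs"
  unfolding dseq_def by auto

lemma dseq_shift: "dseq S f fs \<Longrightarrow> (\<And>x. x \<in> T \<Longrightarrow> x + c \<in> S) \<Longrightarrow> dseq T (\<lambda>x. f (x + c)) (\<lambda>n x. fs n (x + c))"
  unfolding dseq_def using DERIV_shift by blast

lemma dseq_const: "dseq S (\<lambda>x. c) (\<lambda>n x. if n = 0 then c else 0)"
  unfolding dseq_def by auto

definition CMp :: "(real \<Rightarrow> real) \<Rightarrow> bool" where
  "CMp f \<longleftrightarrow> (\<exists>fs. dseq {0<..} f fs \<and> (\<forall>n x. x > 0 \<longrightarrow> 0 \<le> (-1)^n * fs n x))"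

lemma CMp_sign:
  assumes "CMp f" "dseq {0<..} f gs" "x > 0"
  shows "0 \<le> (-1)^n * gs n x"
proof -
  obtain fs where fs: "dseq {0<..} f fs" "\<And>n x. x > 0 \<Longrightarrow> 0 \<le> (-1)^n * fs n x"
    using assms(1) unfolding CMp_def by blast
  have "(deriv^^n) f x = fs n x" "(deriv^^n) f x = gs n x"
    using dseq_deriv[OF _ fs(1)] dseq_deriv[OF _ assms(2)] assms(3) by auto
  then show ?thesis using fs(2)[OF assms(3)] by simp
qed

lemma CMp_add: "CMp f \<Longrightarrow> CMp g \<Longrightarrow> CMp (\<lambda>x. f x + g x)"
  unfolding CMp_def
  apply (elim exE conjE)
  subgoal for fs gs
    by (rule exI[of _ "\<lambda>n x. fs n x + gs n x"]) (auto intro!: dseq_add simp: algebra_simps)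
  done

lemma CMp_cmult: "CMp f \<Longrightarrow> c \<ge> 0 \<Longrightarrow> CMp (\<lambda>x. c * f x)"
  unfolding CMp_def
  apply (elim exE conjE)
  subgoal for fs
    by (rule exI[of _ "\<lambda>n x. c * fs n x"]) (auto intro!: dseq_cmult simp: mult.left_commute[of _ c])
  done

lemma CMp_mult: "CMp f \<Longrightarrow> CMp g \<Longrightarrow> CMp (\<lambda>x. f x * g x)"
  unfolding CMp_def
  apply (elim exE conjE)
  subgoal for fs gs
    by (rule exI[of _ "\<lambda>n x. Pm n fs gs x"]) (auto intro!: dseq_mult Pm_sign)
  done

lemma CMp_cong: "CMp f \<Longrightarrow> (\<And>x. x > 0 \<Longrightarrow> f x = g x) \<Longrightarrow> CMp g"
  unfolding CMp_def using dseq_cong by (metis greaterThan_iff)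

lemma CMp_inv_pow:
  assumes a: "a \<ge> 0" shows "CMp (\<lambda>x. 1 / (x + a)^e)"
  unfolding CMp_def
proof (intro exI conjI allI impI)
  show "dseq {0<..} (\<lambda>x. 1 / (x + a)^e) (\<lambda>n x. (-1)^n * pochhammer (real e) n / (x+a)^(e+n))"
    by (rule dseq_mono[OF dseq_power_inv]) (use a in auto)
  fix n and x :: real assume x: "0 < x"
  have "0 \<le> pochhammer (real e) n / (x+a)^(e+n)"
    using x a pochhammer_of_nat[of e n, where 'a=real] by (intro divide_nonneg_nonneg) auto
  then show "0 \<le> (-1)^n * ((-1)^n * pochhammer (real e) n / (x+a)^(e+n))"
    by (simp add: mult.assoc[symmetric])
qed

lemma CMp_pt: "CMp (\<lambda>x. 1 / (x^l * (x+1)^i * (x+2)^j * (x+3)^k))"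
proof -
  have "CMp (\<lambda>x. 1 / (x+0)^l * (1 / (x+1)^i) * (1 / (x+2)^j) * (1/(x+3)^k))"
    by (intro CMp_mult CMp_inv_pow) auto
  then show ?thesis by (rule CMp_cong) simp
qed

primrec pf :: "(real \<times> nat \<times> nat) list \<Rightarrow> real \<Rightarrow> real" where
  "pf [] x = 0"
| "pf (t # L) x = (case t of (c, a, e) \<Rightarrow> c / (x + real a)^e) + pf L x"

primrec pfs :: "(real \<times> nat \<times> nat) list \<Rightarrow> nat \<Rightarrow> real \<Rightarrow> real" where
  "pfs [] n x = 0"
| "pfs (t # L) n x = (case t of (c, a, e) \<Rightarrow> c * ((-1)^n * pochhammer (real e) n / (x + real a)^(e+n))) + pfs L n x"

lemma dseq_pf: "dseq {0<..} (pf L) (pfs L)"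
proof (induction L)
  case Nil
  show ?case by (simp add: dseq_def)
next
  case (Cons t L)
  obtain c a e where t: "t = (c, a, e)" by (cases t) auto
  have "dseq {0<..} (\<lambda>x. c * (1 / (x + real a)^e) + pf L x)
          (\<lambda>n x. c * ((-1)^n * pochhammer (real e) n / (x + real a)^(e+n)) + pfs L n x)"
    by (intro dseq_add dseq_cmult Cons dseq_mono[OF dseq_power_inv]) auto
  then show ?case unfolding t by (auto simp: dseq_def)
qed

lemma pfs_lim:
  assumes "\<forall>(c,a,e)\<in>set L. e \<ge> 1"
  shows "(\<lambda>m. pfs L n (x + real m)) \<longlonglongrightarrow> 0"
  using assms
proof (induction L)
  case Nil then show ?case by simp
next
  case (Cons t L)
  obtain c a e where t: "t = (c, a, e)" by (cases t) auto
  have e: "e + n > 0" using Cons.prems t by auto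
  have "filterlim (\<lambda>m. (x + real a) + real m) at_top sequentially"
    by (rule filterlim_tendsto_add_at_top[OF tendsto_const filterlim_real_sequentially])
  then have "filterlim (\<lambda>m. (x + real m + real a)^(e+n)) at_top sequentially"
    by (intro filterlim_pow_at_top[OF e]) (simp add: add_ac)
  then have "(\<lambda>m. c * ((-1)^n * pochhammer (real e) n) / (x + real m + real a)^(e+n)) \<longlonglongrightarrow> 0"
    by (intro tendsto_divide_0[OF tendsto_const] filterlim_at_top_imp_at_infinity)
  then have "(\<lambda>m. c * ((-1)^n * pochhammer (real e) n / (x + real m + real a)^(e+n)) + pfs L n (x + real m)) \<longlonglongrightarrow> 0 + 0"
    by (intro tendsto_add Cons.IH) (use Cons.prems in auto)
  then show ?case unfolding t by simp
qed

lemma pf_shift: "pf L (x + 1) = pf (map (\<lambda>(c,a,e). (c, Suc a, e)) L) x"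
  by (induction L) (auto simp: add_ac)

lemma pfs_shift: "pfs L n (x + 1) = pfs (map (\<lambda>(c,a,e). (c, Suc a, e)) L) n x"
  by (induction L) (auto simp: add_ac)

lemma pf_append: "pf (L1 @ L2) x = pf L1 x + pf L2 x"
  by (induction L1) auto

lemma pfs_append: "pfs (L1 @ L2) n x = pfs L1 n x + pfs L2 n x"
  by (induction L1) auto

lemma pf_scale: "pf (map (\<lambda>(c,a,e). (r * c, a, e)) L) x = r * pf L x"
  by (induction L) (auto simp: algebra_simps)

lemma pfs_scale: "pfs (map (\<lambda>(c,a,e). (r * c, a, e)) L) n x = r * pfs L n x"
  by (induction L) (auto simp: algebra_simps)

primrec Qp :: "nat list \<Rightarrow> real \<Rightarrow> real" where
  "Qp [] x = 1"
| "Qp (e # E) x = x^e * Qp E (x + 1)"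

definition ptl :: "nat list \<Rightarrow> real \<Rightarrow> real" where
  "ptl es x = 1 / Qp es x"

fun polyl :: "nat list \<Rightarrow> nat list \<Rightarrow> real \<Rightarrow> real" where
  "polyl [] es x = 1"
| "polyl (e # E) [] x = x^e * polyl E [] (x + 1)"
| "polyl (e # E) (f # es) x = x^(e - f) * polyl E es (x + 1)"

fun lepad :: "nat list \<Rightarrow> nat list \<Rightarrow> bool" where
  "lepad E [] = True"
| "lepad [] (f # es) = False"
| "lepad (e # E) (f # es) = (f \<le> e \<and> lepad E es)"

lemma Qp_pos: "x > 0 \<Longrightarrow> Qp E x > 0"
  by (induction E arbitrary: x) auto

lemma polyl_Nil: "polyl E [] x = Qp E x"
  by (induction E arbitrary: x) auto

lemma Qp_split: "lepad E es \<Longrightarrow> Qp E x = polyl E es x * Qp es x"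
proof (induction E es arbitrary: x rule: lepad.induct)
  case (1 E) then show ?case by (simp add: polyl_Nil)
next
  case (2 f es) then show ?case by simp
next
  case (3 e E f es)
  then have "x^e = x^(e-f) * x^f" by (simp add: power_add[symmetric])
  then show ?case using 3 by simp
qed

definition pc :: "(real \<times> nat list) list \<Rightarrow> real \<Rightarrow> real" where
  "pc C x = (\<Sum>(c, es)\<leftarrow>C. c * ptl es x)"

lemma pc_frac:
  assumes x: "x > 0" and l: "\<forall>(c,es)\<in>set C. lepad E es"
  shows "pc C x = (\<Sum>(c, es)\<leftarrow>C. c * polyl E es x) / Qp E x"
  using l
proof (induction C)
  case Nil then show ?case by (simp add: pc_def)
next
  case (Cons t C)
  obtain c es where t: "t = (c, es)" by (cases t) auto
  have le: "lepad E es" using Cons.prems t by auto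
  have q: "Qp E x > 0" "Qp es x > 0" using Qp_pos x by auto
  have p: "polyl E es x > 0" using q Qp_split[OF le, of x] by (metis zero_less_mult_pos2)
  have "c * ptl es x = c * polyl E es x / Qp E x"
    using Qp_split[OF le, of x] q p by (simp add: ptl_def field_simps)
  moreover have "pc C x = (\<Sum>(c, es)\<leftarrow>C. c * polyl E es x) / Qp E x" using Cons by auto
  ultimately show ?case unfolding t by (simp add: pc_def add_divide_distrib)
qed

lemma pc_eq:
  assumes x: "x > 0" and "\<forall>(c,es)\<in>set C. lepad E es" "\<forall>(c,es)\<in>set D. lepad E es"
    and "(\<Sum>(c, es)\<leftarrow>C. c * polyl E es x) = (\<Sum>(c, es)\<leftarrow>D. c * polyl E es x)"
  shows "pc C x = pc D x"
  using pc_frac[OF x assms(2)] pc_frac[OF x assms(3)] assms(4) by simp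

lemma Qp_single: "Qp (replicate a 0 @ [e]) x = (x + real a)^e"
  by (induction a arbitrary: x) (auto simp: add_ac)

definition pfc :: "(real \<times> nat \<times> nat) list \<Rightarrow> (real \<times> nat list) list" where
  "pfc L = map (\<lambda>(c,a,e). (c, replicate a 0 @ [e])) L"

lemma pf_pc: "pf L x = pc (pfc L) x"
  by (induction L) (auto simp: pfc_def pc_def ptl_def Qp_single)

lemma pc_append: "pc (C @ D) x = pc C x + pc D x"
  by (simp add: pc_def)

lemma pc_neg: "pc (map (\<lambda>(c,es). (- c, es)) C) x = - pc C x"
  by (induction C) (auto simp: pc_def)

lemma CMp_shift: "CMp f \<Longrightarrow> c \<ge> 0 \<Longrightarrow> CMp (\<lambda>x. f (x + c))"
  unfolding CMp_def
  apply (elim exE conjE)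
  subgoal for fs
    by (rule exI[of _ "\<lambda>n x. fs n (x + c)"]) (auto intro!: dseq_shift)
  done

lemma CMp_ptl: "CMp (ptl es)"
proof (induction es)
  case Nil
  have "CMp (\<lambda>x. 1 / (x + 0)^0)" by (rule CMp_inv_pow) simp
  then show ?case by (rule CMp_cong) (simp add: ptl_def)
next
  case (Cons e es)
  have "CMp (\<lambda>x. 1 / (x + 0)^e * ptl es (x + 1))"
    by (intro CMp_mult CMp_inv_pow CMp_shift Cons) auto
  then show ?case by (rule CMp_cong) (simp add: ptl_def)
qed

lemma CMp_pc: "\<forall>(c,es)\<in>set C. c \<ge> 0 \<Longrightarrow> CMp (pc C)"
proof (induction C)
  case Nil
  have "CMp (\<lambda>x. 0 * ptl [] x)" by (intro CMp_cmult CMp_ptl) simp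
  then show ?case by (rule CMp_cong) (simp add: pc_def)
next
  case (Cons t C)
  obtain c es where t: "t = (c, es)" by (cases t) auto
  have "CMp (\<lambda>x. c * ptl es x + pc C x)"
    by (intro CMp_add CMp_cmult CMp_ptl Cons.IH) (use Cons.prems t in auto)
  then show ?case unfolding t by (rule CMp_cong) (simp add: pc_def)
qed

definition LA :: "(real \<times> nat \<times> nat) list" where "LA = [(1/24, 0, 1), (- 1/24, 1, 3), (1/8, 1, 2), (- 3/8, 1, 1), (1/6, 2, 2), (1/3, 2, 1)]"
definition LB :: "(real \<times> nat \<times> nat) list" where "LB = [(1, 0, 2), (- 1/2, 1, 4), (2, 1, 3), (- 7/2, 1, 2), (43/6, 1, 1), (- 13/6, 2, 2), (- 37/6, 2, 1)]"
definition CE :: "(real \<times> nat list) list" where "CE = [(1/6, [1,3,3,2]), (13/24, [1,1,1,2]), (1/12, [1,0,3,1]), (5/24, [1,0,2,2])]"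
definition CDB :: "(real \<times> nat list) list" where "CDB = [(4, [0,4,3,3]), (1, [0,3,5,2]), (1/6, [0,1,1,3]), (1, [0,0,5,3]), (7/6, [0,0,4,3]), (7/3, [0,0,4,1]), (5/6, [0,0,3,2])]"
definition CG :: "(real \<times> nat list) list" where "CG = [(9/2, [1,4,3,2]), (31/12, [1,3,4,2]), (19/12, [1,0,4,1]), (23/6, [1,0,3,2]), (13/12, [0,4,1,1]), (1/3, [0,4,0,2])]"

definition negc :: "(real \<times> nat list) list \<Rightarrow> (real \<times> nat list) list" where
  "negc C = map (\<lambda>(c,es). (- c, es)) C"
definition shiftl :: "(real \<times> nat \<times> nat) list \<Rightarrow> (real \<times> nat \<times> nat) list" where
  "shiftl L = map (\<lambda>(c,a,e). (c, Suc a, e)) L"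
definition scalec :: "real \<Rightarrow> (real \<times> nat list) list \<Rightarrow> (real \<times> nat list) list" where
  "scalec r C = map (\<lambda>(c,es). (r * c, es)) C"

lemma pc_Cons: "pc (t # C) x = pc [t] x + pc C x"
  by (simp add: pc_def)

lemma pc_negc: "pc (negc C) x = - pc C x"
  unfolding negc_def by (rule pc_neg)

lemma pc_scalec: "pc (scalec r C) x = r * pc C x"
  by (induction C) (auto simp: scalec_def pc_def algebra_simps)

lemma pf_diff: "pf L x - pf L (x+1) = pc (pfc L @ negc (pfc (shiftl L))) x"
  by (simp add: pc_append pc_negc pf_pc[symmetric] pf_shift shiftl_def)

lemma I_E: assumes x: "x > 0" shows "pf LA x - pf LA (x+1) = pc CE x"
  unfolding pf_diff
  apply (rule pc_eq[OF x, where E="[1,3,3,2]"])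
    apply (simp_all add: LA_def CE_def pfc_def negc_def shiftl_def numeral_2_eq_2)
  apply (simp add: divide_simps)
  apply algebra
  done

lemma I_DB: assumes x: "x > 0" shows "1/x^2 - (pf LB x - pf LB (x+1)) = pc CDB x"
proof -
  have "1/x^2 = pc [(1,[2])] x" by (simp add: pc_def ptl_def)
  then have "1/x^2 - (pf LB x - pf LB (x+1)) = pc ([(1,[2])] @ negc (pfc LB @ negc (pfc (shiftl LB)))) x"
    by (simp add: pf_diff pc_append pc_negc pc_Cons[of _ "negc _"])
  also have "\<dots> = pc CDB x"
    apply (rule pc_eq[OF x, where E="[2,4,5,3]"])
      apply (simp_all add: LB_def CDB_def pfc_def negc_def shiftl_def numeral_2_eq_2)
    apply (simp add: divide_simps)
    apply algebra
    done
  finally show ?thesis .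
qed

lemma I_G: assumes x: "x > 0" shows "4 * pc CE x - pc CDB x = pc CG x"
proof -
  have "4 * pc CE x - pc CDB x = pc (scalec 4 CE @ negc CDB) x"
    by (simp add: pc_append pc_negc pc_scalec)
  also have "\<dots> = pc CG x"
    apply (rule pc_eq[OF x, where E="[1,4,5,3]"])
      apply (simp_all add: CE_def CDB_def CG_def scalec_def negc_def)
    apply (simp add: divide_simps)
    apply algebra
    done
  finally show ?thesis .
qed

lemma I_H: assumes x: "x > 0" shows "pc CG x \<le> 25 * ptl [1,1,1,1,1,1] x"
proof -
  have s: "pc [(25,[1,1,1,1,1,1])] x = 25 * ptl [1,1,1,1,1,1] x" by (simp add: pc_def)
  have "25 * ptl [1,1,1,1,1,1] x - pc CG x = pc ([(25,[1,1,1,1,1,1])] @ negc CG) x"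
    unfolding pc_append pc_negc s by simp
  also have "\<dots> = (\<Sum>(c, es)\<leftarrow>[(25,[1,1,1,1,1,1])] @ negc CG. c * polyl [1,4,4,2,1,1] es x) / Qp [1,4,4,2,1,1] x"
    by (rule pc_frac[OF x]) (simp add: CG_def negc_def)
  also have "(\<Sum>(c, es)\<leftarrow>[(25,[1,1,1,1,1,1])] @ negc CG. c * polyl [1,4,4,2,1,1] es x) =
     (120::real) + (814::real) * x^1 + (3789/2::real) * x^2 + (7313/3::real) * x^3 + (3723/2::real) * x^4 + (4933/6::real) * x^5 + (192::real) * x^6 + (109/6::real) * x^7"
    apply (simp add: CG_def negc_def)
    apply (simp add: divide_simps)
    apply algebra
    done
  finally have "25 * ptl [1,1,1,1,1,1] x - pc CG x = ((120::real) + (814::real) * x^1 + (3789/2::real) * x^2 + (7313/3::real) * x^3 + (3723/2::real) * x^4 + (4933/6::real) * x^5 + (192::real) * x^6 + (109/6::real) * x^7) / Qp [1,4,4,2,1,1] x" .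
  moreover have "0 \<le> ((120::real) + (814::real) * x^1 + (3789/2::real) * x^2 + (7313/3::real) * x^3 + (3723/2::real) * x^4 + (4933/6::real) * x^5 + (192::real) * x^6 + (109/6::real) * x^7) / Qp [1,4,4,2,1,1] x"
    using x Qp_pos[OF x, of "[1,4,4,2,1,1]"] by (intro divide_nonneg_nonneg) auto
  ultimately show ?thesis by simp
qed

lemma pc_shift: "pc C (x + 1) = pc (map (\<lambda>(c,es). (c, 0 # es)) C) x"
  by (induction C) (auto simp: pc_def ptl_def)

lemma I_h: assumes x: "x > 0" shows "pc [(5,[1,1,1,1,1])] x - pc [(5,[1,1,1,1,1])] (x+1) = 25 * ptl [1,1,1,1,1,1] x"
proof -
  have "pc [(5,[1,1,1,1,1])] x - pc [(5,[1,1,1,1,1])] (x+1) = pc ([(5,[1,1,1,1,1])] @ negc [(5,[0,1,1,1,1,1])]) x"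
    by (simp only: pc_shift pc_append pc_negc) simp
  also have "\<dots> = pc [(25,[1,1,1,1,1,1])] x"
    apply (rule pc_eq[OF x, where E="[1,1,1,1,1,1]"])
      apply (simp_all add: negc_def divide_simps)
    done
  finally show ?thesis by (simp add: pc_def)
qed

lemma I_A: assumes x: "x > 0" shows "pf LA x = (4 + 8*x + 5*x^2) / (24 * x * (1+x)^3 * (2+x)^2)"
proof -
  have "pf LA x = (\<Sum>(c, es)\<leftarrow>pfc LA. c * polyl [1,3,2] es x) / Qp [1,3,2] x"
    unfolding pf_pc by (rule pc_frac[OF x]) (simp add: LA_def pfc_def numeral_2_eq_2)
  also have "(\<Sum>(c, es)\<leftarrow>pfc LA. c * polyl [1,3,2] es x) = (4 + 8*x + 5*x^2) / 24"
    apply (simp add: LA_def pfc_def numeral_2_eq_2)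
    apply algebra
    done
  also have "Qp [1,3,2] x = x * (1+x)^3 * (2+x)^2"
    by (simp add: numeral_2_eq_2 add_ac)
  finally show ?thesis by simp
qed

lemma I_B: assumes x: "x > 0" shows "pf LB x = (24 + 120*x + 283*x^2 + 399*x^3 + 345*x^4 + 181*x^5 + 51*x^6 + 6*x^7)
       / (6 * x^2 * (1+x)^4 * (2+x)^2)"
proof -
  have "pf LB x = (\<Sum>(c, es)\<leftarrow>pfc LB. c * polyl [2,4,2] es x) / Qp [2,4,2] x"
    unfolding pf_pc by (rule pc_frac[OF x]) (simp add: LB_def pfc_def numeral_2_eq_2)
  also have "(\<Sum>(c, es)\<leftarrow>pfc LB. c * polyl [2,4,2] es x) = (24 + 120*x + 283*x^2 + 399*x^3 + 345*x^4 + 181*x^5 + 51*x^6 + 6*x^7) / 6"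
    apply (simp add: LB_def pfc_def numeral_2_eq_2)
    apply algebra
    done
  also have "Qp [2,4,2] x = x^2 * (1+x)^4 * (2+x)^2"
    by (simp add: numeral_2_eq_2 add_ac)
  finally show ?thesis by simp
qed

lemma pos_notin: "(x::real) > 0 \<Longrightarrow> x \<notin> \<int>\<^sub>\<le>\<^sub>0"
  by (auto dest: nonpos_Ints_nonpos)

lemma Polygamma_lim:
  assumes x: "x > 0"
  shows "(\<lambda>m. Polygamma (Suc n) (x + real m)) \<longlonglongrightarrow> 0"
proof -
  define f where "f k = inverse ((x + real k)^Suc (Suc n))" for k
  have sm: "summable f" using Polygamma_converges'[of x "Suc (Suc n)"] x unfolding f_def by simp
  have t: "(\<lambda>m. \<Sum>k. f (k + m)) \<longlonglongrightarrow> 0" by (rule suminf_exist_split2[OF sm])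
  have eq: "Polygamma (Suc n) (x + real m) = (-1)^Suc(Suc n) * fact (Suc n) * (\<Sum>k. f (k + m))" for m
    by (simp add: Polygamma_def f_def add_ac)
  show ?thesis unfolding eq using tendsto_mult[OF tendsto_const t, of "(-1)^Suc(Suc n) * fact (Suc n)"] by simp
qed

lemma poch2: "pochhammer (2::real) n = fact (Suc n)"
  by (induction n) (simp_all add: pochhammer_rec' algebra_simps)

lemma pfs0: "pfs L 0 x = pf L x"
  by (induction L) auto

lemma LA_e: "\<forall>(c,a,e)\<in>set LA. e \<ge> 1" by (simp add: LA_def)
lemma LB_e: "\<forall>(c,a,e)\<in>set LB. e \<ge> 1" by (simp add: LB_def)

lemma F_pf: assumes x: "x > 0" shows "F_lambda lam x = Polygamma 1 x + (- lam) * pf LA x + (- 1) * pf LB x"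
proof -
  have "F_lambda lam x = Polygamma 1 x - lam * pf LA x - pf LB x"
    unfolding F_lambda_def I_A[OF x] I_B[OF x] by simp
  then show ?thesis by simp
qed

lemma dseq_F: "dseq {0<..} (\<lambda>x. s * F_lambda lam x)
   (\<lambda>n x. s * (Polygamma (Suc n) x + (- lam) * pfs LA n x + (- 1) * pfs LB n x))"
proof -
  have p: "dseq {0<..} (Polygamma 1) (\<lambda>n. Polygamma (Suc n))"
    unfolding dseq_def using has_field_derivative_Polygamma pos_notin by auto
  have "dseq {0<..} (\<lambda>x. s * (Polygamma 1 x + (- lam) * pf LA x + (- 1) * pf LB x))
   (\<lambda>n x. s * (Polygamma (Suc n) x + (- lam) * pfs LA n x + (- 1) * pfs LB n x))"
    by (intro dseq_cmult dseq_add p dseq_pf)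
  then show ?thesis by (rule dseq_cong) (simp add: F_pf)
qed

definition Dfun :: "real \<Rightarrow> real \<Rightarrow> real" where
  "Dfun lam x = 1 / (x + 0)^2 + (- lam) * (pf LA x + (- 1) * pf LA (x + 1)) + (- 1) * pf LB x + pf LB (x + 1)"

definition Ds :: "real \<Rightarrow> nat \<Rightarrow> real \<Rightarrow> real" where
  "Ds lam n x = (-1)^n * pochhammer (real 2) n / (x + 0)^(2 + n) + (- lam) * (pfs LA n x + (- 1) * pfs LA n (x + 1))
      + (- 1) * pfs LB n x + pfs LB n (x + 1)"

lemma dseq_D: "dseq {0<..} (\<lambda>x. s * Dfun lam x) (\<lambda>n x. s * Ds lam n x)"
proof -
  have p: "dseq {0<..} (\<lambda>x. 1 / (x + 0)^2) (\<lambda>n x. (-1)^n * pochhammer (real 2) n / (x + 0)^(2 + n))"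
    by (rule dseq_mono[OF dseq_power_inv]) auto
  have sh: "dseq {0<..} (\<lambda>x. pf L (x + 1)) (\<lambda>n x. pfs L n (x + 1))" for L
    by (rule dseq_shift[OF dseq_pf]) auto
  show ?thesis unfolding Dfun_def Ds_def
    by (intro dseq_cmult dseq_add p sh dseq_pf)
qed

lemma step:
  assumes x: "x > 0"
  shows "(-1)^n * (s * (Polygamma (Suc n) x + (- lam) * pfs LA n x + (- 1) * pfs LB n x))
       - (-1)^n * (s * (Polygamma (Suc n) (x+1) + (- lam) * pfs LA n (x+1) + (- 1) * pfs LB n (x+1)))
       = (-1)^n * (s * Ds lam n x)"
proof -
  have pp: "Polygamma (Suc n) (x + 1) = Polygamma (Suc n) x + (-1)^Suc n * fact (Suc n) / x ^ Suc (Suc n)"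
    using x by (intro Polygamma_plus1) auto
  show ?thesis unfolding pp Ds_def by (simp add: poch2 algebra_simps) (simp add: add_divide_distrib[symmetric])
qed

lemma suff:
  assumes cm: "CMp (\<lambda>x. s * Dfun lam x)"
  shows "completely_monotonic_on {0<..} (\<lambda>x. s * F_lambda lam x)"
proof (rule dseq_cm[OF dseq_F])
  fix n :: nat and x :: real assume x: "x > 0"
  define G where "G y = (-1)^n * (s * (Polygamma (Suc n) y + (- lam) * pfs LA n y + (- 1) * pfs LB n y))" for y
  have dec: "G (y + 1) \<le> G y" if y: "y > 0" for y
    using step[OF y, of n s lam] CMp_sign[OF cm dseq_D y, of n] unfolding G_def by simp
  have mono: "G (x + real m) \<le> G x" for m
  proof (induction m)
    case (Suc m)
    have "G (x + real (Suc m)) = G ((x + real m) + 1)" by (simp add: add_ac)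
    also have "\<dots> \<le> G (x + real m)" by (rule dec) (use x in auto)
    finally show ?case using Suc by simp
  qed simp
  have lim: "(\<lambda>m. G (x + real m)) \<longlonglongrightarrow> (-1)^n * (s * (0 + (- lam) * 0 + (- 1) * 0))"
    unfolding G_def
    by (intro tendsto_intros Polygamma_lim x pfs_lim LA_e LB_e)
  have "0 \<le> G x"
    using LIMSEQ_le_const2[OF lim] mono by auto
  then show "0 \<le> (-1)^n * (s * (Polygamma (Suc n) x + (- lam) * pfs LA n x + (- 1) * pfs LB n x))"
    by (simp add: G_def)
qed

lemma Dfun_eq: assumes x: "x > 0" shows "Dfun lam x = pc CDB x - lam * pc CE x"
  unfolding I_E[OF x, symmetric] I_DB[OF x, symmetric] Dfun_def by (simp add: algebra_simps)

lemma S1: assumes "lam \<le> 0" shows "completely_monotonic_on {0<..} (F_lambda lam)"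
proof -
  have "CMp (\<lambda>x. pc CDB x + (- lam) * pc CE x)"
    by (intro CMp_add CMp_cmult CMp_pc) (use assms in \<open>auto simp: CDB_def CE_def\<close>)
  then have "CMp (\<lambda>x. 1 * Dfun lam x)" by (rule CMp_cong) (simp add: Dfun_eq)
  from suff[OF this] show ?thesis by simp
qed

lemma S2: assumes "lam \<ge> 4" shows "completely_monotonic_on {0<..} (\<lambda>x. - F_lambda lam x)"
proof -
  have "CMp (\<lambda>x. (lam - 4) * pc CE x + pc CG x)"
    by (intro CMp_add CMp_cmult CMp_pc) (use assms in \<open>auto simp: CG_def CE_def\<close>)
  then have "CMp (\<lambda>x. (-1) * Dfun lam x)" by (rule CMp_cong) (simp add: Dfun_eq I_G[symmetric] algebra_simps)
  from suff[OF this] show ?thesis by simp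
qed

lemma cm_nonneg: "completely_monotonic_on {0<..} f \<Longrightarrow> x > 0 \<Longrightarrow> 0 \<le> f x"
  unfolding completely_monotonic_on_def by (metis funpow_0 greaterThan_iff mult_1 power_0)

lemma N1:
  assumes "lam > 0" shows "\<not> completely_monotonic_on {0<..} (F_lambda lam)"
proof
  assume cm: "completely_monotonic_on {0<..} (F_lambda lam)"
  define r1 where "r1 x = - (37/6 + 45/2*x + 63/2*x^2 + 133/6*x^3 + 15/2*x^4 + x^5) / ((1+x)^4*(2+x)^2)" for x :: real
  define r2 where "r2 x = (4 + 8*x + 5*x^2) / (24 * (1+x)^3 * (2+x)^2)" for x :: real
  have eq: "x * F_lambda lam x = x * Polygamma 1 (x + 1) + x * r1 x - lam * r2 x" if x: "x > 0" for x
  proof -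
    have pp: "Polygamma 1 (x + 1) = Polygamma 1 x - 1 / x^2"
      using Polygamma_plus1[of x 1] x by (simp add: power2_eq_square)
    have e1: "1 / x^2 - (24 + 120*x + 283*x^2 + 399*x^3 + 345*x^4 + 181*x^5 + 51*x^6 + 6*x^7)
       / (6 * x^2 * (1+x)^4 * (2+x)^2) = r1 x"
      unfolding r1_def using x by (simp add: divide_simps) algebra
    have e2: "x * (lam * (4 + 8*x + 5*x^2) / (24 * x * (1+x)^3 * (2+x)^2)) = lam * r2 x"
      unfolding r2_def using x by (simp add: divide_simps)
    show ?thesis
      unfolding F_lambda_def pp e1[symmetric] e2[symmetric] by (simp add: algebra_simps)
  qed
  have one: "(1::real) \<notin> \<int>\<^sub>\<le>\<^sub>0" by (rule pos_notin) simp
  have lim: "((\<lambda>x. x * Polygamma 1 (x + 1) + x * r1 x - lam * r2 x) \<longlongrightarrow>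
        0 * Polygamma 1 (0 + 1) + 0 * r1 0 - lam * r2 0) (at_right 0)"
    unfolding r1_def r2_def
    by (intro tendsto_intros tendsto_Polygamma) (use one in auto)
  have r20: "r2 0 = 1/24" by (simp add: r2_def)
  have lim2: "((\<lambda>x. x * Polygamma 1 (x + 1) + x * r1 x - lam * r2 x) \<longlongrightarrow> - lam / 24) (at_right 0)"
    using lim unfolding r20 by simp
  have "\<forall>\<^sub>F x in at_right 0. x * Polygamma 1 (x + 1) + x * r1 x - lam * r2 x < 0"
    by (rule order_tendstoD(2)[OF lim2]) (use assms in simp)
  moreover have "\<forall>\<^sub>F x in at_right (0::real). 0 < x" by (rule eventually_at_right_less)
  ultimately have "\<forall>\<^sub>F x in at_right (0::real). 0 < x \<and> x * Polygamma 1 (x + 1) + x * r1 x - lam * r2 x < 0"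
    by eventually_elim auto
  then obtain x :: real where x: "0 < x" "x * Polygamma 1 (x + 1) + x * r1 x - lam * r2 x < 0"
    using eventually_happens' trivial_limit_at_right_real by blast
  then have "x * F_lambda lam x < 0" using eq by simp
  moreover have "0 \<le> F_lambda lam x" using cm_nonneg[OF cm x(1)] .
  ultimately show False using x(1) by (simp add: mult_less_0_iff)
qed

lemma F_diff: assumes x: "x > 0" shows "F_lambda lam x - F_lambda lam (x + 1) = Dfun lam x"
proof -
  have pp: "Polygamma 1 (x + 1) = Polygamma 1 x - 1 / x^2"
    using Polygamma_plus1[of x 1] x by (simp add: power2_eq_square)
  have x1: "x + 1 > 0" using x by simp
  show ?thesis unfolding F_pf[OF x] F_pf[OF x1] pp Dfun_def by (simp add: algebra_simps)
qed

lemma N2: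
  assumes "lam < 4" shows "\<not> completely_monotonic_on {0<..} (\<lambda>x. - F_lambda lam x)"
proof
  assume cm: "completely_monotonic_on {0<..} (\<lambda>x. - F_lambda lam x)"
  define h where "h y = pc [(5,[1,1,1,1,1])] y" for y
  define K where "K y = - F_lambda 4 y - h y" for y
  have hs: "h y = 5 / (y * (y + 1) * (y + 1 + 1) * (y + 1 + 1 + 1) * (y + 1 + 1 + 1 + 1))" for y
    by (simp add: h_def pc_def ptl_def)
  have dec: "K y \<le> K (y + 1)" if y: "y > 0" for y
  proof -
    have "K y - K (y + 1) = - Dfun 4 y - (h y - h (y + 1))"
      using F_diff[OF y, of 4] unfolding K_def by simp
    also have "\<dots> = pc CG y - 25 * ptl [1,1,1,1,1,1] y"
      using Dfun_eq[OF y, of 4] I_G[OF y] I_h[OF y] unfolding h_def by simp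
    also have "\<dots> \<le> 0" using I_H[OF y] by simp
    finally show ?thesis by simp
  qed
  have lb: "- h y \<le> F_lambda 4 y" if y: "y > 0" for y
  proof -
    have mono: "K y \<le> K (y + real m)" for m
    proof (induction m)
      case (Suc m)
      have "K (y + real m) \<le> K ((y + real m) + 1)" by (rule dec) (use y in auto)
      then show ?case using Suc by (simp add: add_ac)
    qed simp
    have pf_lim: "(\<lambda>m. pf L (y + real m)) \<longlonglongrightarrow> 0" if "\<forall>(c,a,e)\<in>set L. e \<ge> 1" for L
      using pfs_lim[OF that, of 0 y] by (simp add: pfs0)
    have hl: "(\<lambda>m. h (y + real m)) \<longlonglongrightarrow> 0"
      unfolding hs using y by real_asymp
    have "(\<lambda>m. K (y + real m)) \<longlonglongrightarrow> - (0 + (- 4) * 0 + (- 1) * 0) - 0"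
    proof -
      have "(\<lambda>m. - (Polygamma (Suc 0) (y + real m) + (- 4) * pf LA (y + real m) + (- 1) * pf LB (y + real m)) - h (y + real m))
          \<longlonglongrightarrow> - (0 + (- 4) * 0 + (- 1) * 0) - 0"
        by (intro tendsto_intros Polygamma_lim y pf_lim LA_e LB_e hl)
      moreover have "K (y + real m) = - (Polygamma (Suc 0) (y + real m) + (- 4) * pf LA (y + real m) + (- 1) * pf LB (y + real m)) - h (y + real m)" for m
        unfolding K_def using F_pf[of "y + real m" 4] y by simp
      ultimately show ?thesis by simp
    qed
    then have "K y \<le> 0" using LIMSEQ_le_const2[of _ _ 0] mono
      by (metis LIMSEQ_le_const add.right_neutral minus_zero mult_zero_right diff_zero)
    then show ?thesis unfolding K_def by simp
  qed
  define A where "A y = (4 + 8*y + 5*y^2) / (24 * y * (1+y)^3 * (2+y)^2)" for y :: real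
  have FA: "F_lambda lam y = F_lambda 4 y + (4 - lam) * A y" for y
  proof -
    have "F_lambda l y = Polygamma 1 y - l * A y - (24 + 120*y + 283*y^2 + 399*y^3 + 345*y^4 + 181*y^5 + 51*y^6 + 6*y^7)
       / (6 * y^2 * (1+y)^4 * (2+y)^2)" for l
      unfolding F_lambda_def A_def by simp
    from this[of lam] this[of 4] show ?thesis by (simp add: algebra_simps)
  qed
  have l1: "((\<lambda>y. y^4 * A y) \<longlongrightarrow> 5/24) at_top" unfolding A_def by real_asymp
  have l2: "((\<lambda>y. y^4 * h y) \<longlongrightarrow> 0) at_top" unfolding hs by real_asymp
  have "((\<lambda>y. (4 - lam) * (y^4 * A y) - y^4 * h y) \<longlongrightarrow> (4 - lam) * (5/24) - 0) at_top"
    by (intro tendsto_intros l1 l2)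
  then have "\<forall>\<^sub>F y in at_top. (4 - lam) * (y^4 * A y) - y^4 * h y > 0"
    by (rule order_tendstoD(1)) (use assms in simp)
  moreover have "\<forall>\<^sub>F y in at_top. (0::real) < y" by (rule eventually_gt_at_top)
  ultimately have "\<forall>\<^sub>F y in at_top. 0 < y \<and> (4 - lam) * (y^4 * A y) - y^4 * h y > 0"
    by eventually_elim auto
  then obtain y :: real where y: "0 < y" "(4 - lam) * (y^4 * A y) - y^4 * h y > 0"
    using eventually_happens' trivial_limit_at_top_linorder by blast
  then have "y^4 * ((4 - lam) * A y - h y) > 0" by (simp add: algebra_simps)
  then have "(4 - lam) * A y - h y > 0" using y(1) by (simp add: zero_less_mult_iff)
  then have "F_lambda lam y > 0" using FA[of y] lb[OF y(1)] by simp
  moreover have "0 \<le> - F_lambda lam y" using cm_nonneg[OF cm y(1)] .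
  ultimately show False by simp
qed

theorem mainTheorem7:
  fixes lam :: real
  shows "(completely_monotonic_on {0<..} (F_lambda lam) \<longleftrightarrow> lam \<le> 0) \<and>
         (completely_monotonic_on {0<..} (\<lambda>x. - F_lambda lam x) \<longleftrightarrow> lam \<ge> 4)"
  using S1 S2 N1 N2 by (meson not_le)

end
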